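(* Let $I\subset S=K[x_1,\dots,x_t]$ be an $\mathfrak m$-primary monomial ideal with $x_i^{a_i}\in\mathscr G(I)$, $a_i\in\mathbb Z_{>0}$, for $i=1,\dots,t$. Then $v(I)\le \sum_{i=1}^t a_i - t$.
   Context: $K$ is a field, $S$ is standard graded and $\mathfrak m=\langle x_1,\dots,x_t\rangle$. For a proper graded ideal $I$, the $v$-number is $v(I)=\min\{k\ge 0 : \exists f\in S_k,\ \mathcal P\in\operatorname{Ass}(S/I) \text{ with } (I:f)=\mathcal P\}$. $\mathscr G(I)$ is the minimal monomial generating set of the monomial ideal $I$. *)

theory Defs
  imports "HOL-Library.Poly_Mapping"
begin

text \<open>The polynomial ring S = K[x_v : v in 'v] (with 'v a finite type, t = CARD('v))
  is modelled as finitely supported maps from exponent vectors to coefficients: a monomial is an exponent vector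
  (finitely supported 'v to nat), a polynomial a coefficient function.\<close>

type_synonym ('v, 'k) mpoly = "('v \<Rightarrow>\<^sub>0 nat) \<Rightarrow>\<^sub>0 'k"

definition monom :: "('v \<Rightarrow>\<^sub>0 nat) \<Rightarrow> ('v, 'k::comm_ring_1) mpoly" where
  "monom m = Poly_Mapping.single m 1"

definition var :: "'v \<Rightarrow> ('v, 'k::comm_ring_1) mpoly" where
  "var i = monom (Poly_Mapping.single i 1)"

definition is_ideal :: "'a::comm_ring_1 set \<Rightarrow> bool" where
  "is_ideal I \<longleftrightarrow> 0 \<in> I \<and> (\<forall>f\<in>I. \<forall>g\<in>I. f + g \<in> I) \<and> (\<forall>f\<in>I. \<forall>h. h * f \<in> I)"

definition ideal_gen :: "'a::comm_ring_1 set \<Rightarrow> 'a set" where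
  "ideal_gen A = \<Inter>{I. is_ideal I \<and> A \<subseteq> I}"

definition prime_ideal :: "'a::comm_ring_1 set \<Rightarrow> bool" where
  "prime_ideal P \<longleftrightarrow> is_ideal P \<and> P \<noteq> UNIV \<and> (\<forall>a b. a * b \<in> P \<longrightarrow> a \<in> P \<or> b \<in> P)"

definition primary_ideal :: "'a::comm_ring_1 set \<Rightarrow> bool" where
  "primary_ideal Q \<longleftrightarrow> is_ideal Q \<and> Q \<noteq> UNIV \<and>
     (\<forall>a b. a * b \<in> Q \<longrightarrow> a \<in> Q \<or> (\<exists>n. b ^ n \<in> Q))"

definition radical :: "'a::comm_ring_1 set \<Rightarrow> 'a set" where
  "radical I = {f. \<exists>n. f ^ n \<in> I}"

definition colon :: "'a::comm_ring_1 set \<Rightarrow> 'a \<Rightarrow> 'a set" where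
  "colon I f = {g. g * f \<in> I}"

definition Ass :: "'a::comm_ring_1 set \<Rightarrow> 'a set set" where
  "Ass I = {P. prime_ideal P \<and> (\<exists>f. colon I f = P)}"

definition max_ideal :: "('v, 'k::comm_ring_1) mpoly set" where
  "max_ideal = ideal_gen (range var)"

definition m_primary :: "('v, 'k::comm_ring_1) mpoly set \<Rightarrow> bool" where
  "m_primary I \<longleftrightarrow> primary_ideal I \<and> radical I = max_ideal"

definition mdeg :: "('v::finite \<Rightarrow>\<^sub>0 nat) \<Rightarrow> nat" where
  "mdeg m = (\<Sum>i\<in>UNIV. Poly_Mapping.lookup m i)"

text \<open>S_k: homogeneous polynomials of degree k (including 0).\<close>
definition homogeneous :: "nat \<Rightarrow> ('v::finite, 'k::comm_ring_1) mpoly \<Rightarrow> bool" where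
  "homogeneous k f \<longleftrightarrow> (\<forall>m\<in>Poly_Mapping.keys f. mdeg m = k)"

definition monomial_ideal :: "('v, 'k::comm_ring_1) mpoly set \<Rightarrow> bool" where
  "monomial_ideal I \<longleftrightarrow> is_ideal I \<and> I = ideal_gen {monom m | m. monom m \<in> I}"

definition mon_dvd :: "('v \<Rightarrow>\<^sub>0 nat) \<Rightarrow> ('v \<Rightarrow>\<^sub>0 nat) \<Rightarrow> bool" where
  "mon_dvd m n \<longleftrightarrow> (\<forall>i. Poly_Mapping.lookup m i \<le> Poly_Mapping.lookup n i)"

definition min_gens :: "('v, 'k::comm_ring_1) mpoly set \<Rightarrow> ('v, 'k) mpoly set" where
  "min_gens I = {monom m | m. monom m \<in> I \<and>
      (\<forall>m'. mon_dvd m' m \<and> m' \<noteq> m \<longrightarrow> monom m' \<notin> I)}"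

definition v_number :: "('v::finite, 'k::comm_ring_1) mpoly set \<Rightarrow> nat" where
  "v_number I = (LEAST k. \<exists>f P. homogeneous k f \<and> P \<in> Ass I \<and> colon I f = P)"

end

theory Submission
  imports Defs
begin

lemma pm_sum_monoms:
  fixes g :: "'a \<Rightarrow>\<^sub>0 'b::comm_monoid_add"
  shows "g = (\<Sum>m\<in>Poly_Mapping.keys g. Poly_Mapping.single m (Poly_Mapping.lookup g m))"
proof (rule poly_mapping_eqI)
  fix k
  show "Poly_Mapping.lookup g k = Poly_Mapping.lookup (\<Sum>m\<in>Poly_Mapping.keys g. Poly_Mapping.single m (Poly_Mapping.lookup g m)) k"
    by (simp add: lookup_sum lookup_single when_def in_keys_iff)
qed

lemma ideal_sum:
  assumes "is_ideal I" "finite A" "\<And>x. x \<in> A \<Longrightarrow> h x \<in> I"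
  shows "sum h A \<in> I"
  using assms(2,3)
proof (induction A rule: finite_induct)
  case empty then show ?case using assms(1) by (simp add: is_ideal_def)
next
  case (insert x F) then show ?case using assms(1) by (simp add: is_ideal_def)
qed

lemma colon_ideal: "is_ideal I \<Longrightarrow> is_ideal (colon I f)"
  unfolding is_ideal_def colon_def by (auto simp: distrib_right mult.assoc)

lemma var_mult_monom: "(var i :: ('v, 'k::comm_ring_1) mpoly) * monom m = monom (m + Poly_Mapping.single i 1)"
  unfolding var_def monom_def by (simp add: mult_single add.commute)

lemma var_pow: "(var i :: ('v, 'k::comm_ring_1) mpoly) ^ n = monom (Poly_Mapping.single i n)"
  by (induction n) (simp_all add: var_def monom_def mult_single single_add[symmetric] add.commute)

lemma mdeg_add_var: "mdeg (m + Poly_Mapping.single i 1 :: 'v::finite \<Rightarrow>\<^sub>0 nat) = mdeg m + 1"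
  unfolding mdeg_def by (simp add: lookup_add sum.distrib lookup_single when_def)

lemma ideal_diff: "is_ideal I \<Longrightarrow> x \<in> I \<Longrightarrow> y \<in> I \<Longrightarrow> x - y \<in> I"
proof -
  assume h: "is_ideal I" "x \<in> I" "y \<in> I"
  then have "(-1) * y \<in> I" unfolding is_ideal_def by blast
  then have "x + (-1) * y \<in> I" using h unfolding is_ideal_def by blast
  then show ?thesis by simp
qed

lemma pm_split_add:
  assumes "Poly_Mapping.lookup n i \<ge> k"
  shows "(n - Poly_Mapping.single i k) + Poly_Mapping.single i k = (n :: 'v \<Rightarrow>\<^sub>0 nat)"
  by (rule poly_mapping_eqI) (use assms in \<open>auto simp: lookup_add lookup_minus lookup_single when_def\<close>)

theorem proposition4p3:
  fixes I :: "('v::finite, 'k::field) mpoly set"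
    and a :: "'v \<Rightarrow> nat"
  assumes "monomial_ideal I"
    and "m_primary I"
    and "\<And>i. a i > 0"
    and "\<And>i. (var i) ^ (a i) \<in> min_gens I"
  shows "v_number I \<le> (\<Sum>i\<in>UNIV. a i) - card (UNIV :: 'v set)"
proof -
  have idI: "is_ideal I" and neI: "I \<noteq> UNIV"
    using assms(2) by (auto simp: m_primary_def primary_ideal_def)
  have one: "(1 :: ('v,'k) mpoly) \<notin> I"
  proof
    assume "(1 :: ('v,'k) mpoly) \<in> I"
    then have "h * 1 \<in> I" for h using idI unfolding is_ideal_def by blast
    then show False using neI by (metis UNIV_eq_I mult_1_right)
  qed
  have powI: "monom (Poly_Mapping.single i (a i)) \<in> I" for i
  proof -
    from assms(4)[of i] obtain m where "var i ^ a i = (monom m :: ('v,'k) mpoly)" "monom m \<in> I"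
      unfolding min_gens_def by blast
    then show ?thesis by (simp add: var_pow)
  qed
  define B where "B = {m. (monom m :: ('v,'k) mpoly) \<notin> I}"
  have Bbd: "Poly_Mapping.lookup m i < a i" if "m \<in> B" for m i
  proof (rule ccontr)
    assume "\<not> ?thesis"
    then have "(m - Poly_Mapping.single i (a i)) + Poly_Mapping.single i (a i) = m"
      by (intro pm_split_add) simp
    then have "(monom m :: ('v,'k) mpoly) = monom (m - Poly_Mapping.single i (a i)) * monom (Poly_Mapping.single i (a i))"
      by (simp add: monom_def mult_single)
    then have "(monom m :: ('v,'k) mpoly) \<in> I" using powI[of i] idI by (simp add: is_ideal_def)
    then show False using that by (simp add: B_def)
  qed
  have mdeg_le: "mdeg m \<le> (\<Sum>i\<in>UNIV. a i - 1)" if "m \<in> B" for m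
  proof -
    have "Poly_Mapping.lookup m i \<le> a i - 1" for i using Bbd[OF that, of i] by arith
    then show ?thesis unfolding mdeg_def by (intro sum_mono) simp
  qed
  define D where "D = mdeg ` B"
  have finD: "finite D"
    by (rule finite_subset[of _ "{..(\<Sum>i\<in>UNIV. a i - 1)}"]) (use mdeg_le in \<open>auto simp: D_def simp del: One_nat_def\<close>)
  have "0 \<in> B" using one by (simp add: B_def monom_def)
  then have neD: "D \<noteq> {}" by (auto simp: D_def)
  obtain m where mB: "m \<in> B" and mmax: "mdeg m = Max D"
    using Max_in[OF finD neD] by (auto simp: D_def)
  define f where "f = (monom m :: ('v,'k) mpoly)"
  have fI: "f \<notin> I" using mB by (simp add: B_def f_def)
  have varf: "var i * f \<in> I" for i
  proof (rule ccontr)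
    assume "var i * f \<notin> I"
    then have "m + Poly_Mapping.single i 1 \<in> B" by (simp add: f_def var_mult_monom B_def)
    then have "mdeg m + 1 \<in> D" by (metis D_def image_eqI mdeg_add_var)
    then have "mdeg m + 1 \<le> Max D" using finD by simp
    then show False using mmax by simp
  qed
  define Z where "Z = {g :: ('v,'k) mpoly. Poly_Mapping.lookup g 0 = 0}"
  have Zsub: "g * f \<in> I" if "g \<in> Z" for g
  proof -
    have "g * f = (\<Sum>n\<in>Poly_Mapping.keys g. Poly_Mapping.single n (Poly_Mapping.lookup g n) * f)"
      by (subst pm_sum_monoms[of g]) (simp add: sum_distrib_right)
    also have "\<dots> \<in> I"
    proof (rule ideal_sum[OF idI])
      fix n assume nk: "n \<in> Poly_Mapping.keys g"
      have "n \<noteq> 0" using nk that by (auto simp: Z_def in_keys_iff)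
      then obtain i where "Poly_Mapping.lookup n i \<noteq> 0"
        by (metis lookup_zero poly_mapping_eqI)
      then have "(n - Poly_Mapping.single i 1) + Poly_Mapping.single i 1 = n"
        by (intro pm_split_add) simp
      then have "Poly_Mapping.single n (Poly_Mapping.lookup g n) * f
          = Poly_Mapping.single (n - Poly_Mapping.single i 1) (Poly_Mapping.lookup g n) * (var i * f)"
        by (simp add: var_def monom_def mult_single mult.assoc[symmetric])
      then show "Poly_Mapping.single n (Poly_Mapping.lookup g n) * f \<in> I"
        using varf[of i] idI by (simp add: is_ideal_def)
    qed simp
    finally show ?thesis .
  qed
  have colZ: "colon I f = Z"
  proof
    show "Z \<subseteq> colon I f" using Zsub by (auto simp: colon_def)
  next
    show "colon I f \<subseteq> Z"
    proof
      fix g assume "g \<in> colon I f"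
      then have gf: "g * f \<in> I" by (simp add: colon_def)
      show "g \<in> Z"
      proof (rule ccontr)
        assume "g \<notin> Z"
        define c where "c = Poly_Mapping.lookup g 0"
        have c0: "c \<noteq> 0" using \<open>g \<notin> Z\<close> by (simp add: Z_def c_def)
        have "g - Poly_Mapping.single 0 c \<in> Z" by (simp add: Z_def c_def lookup_minus)
        then have "(g - Poly_Mapping.single 0 c) * f \<in> I" by (rule Zsub)
        then have "g * f - (g - Poly_Mapping.single 0 c) * f \<in> I" using gf idI ideal_diff by blast
        then have "Poly_Mapping.single 0 c * f \<in> I" by (simp add: algebra_simps)
        then have "Poly_Mapping.single 0 (inverse c) * (Poly_Mapping.single 0 c * f) \<in> I"
          using idI by (simp add: is_ideal_def)
        then have "f \<in> I" using c0 by (simp add: mult.assoc[symmetric] mult_single)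
        then show False using fI by simp
      qed
    qed
  qed
  have idZ: "is_ideal Z" using colon_ideal[OF idI, of f] colZ by simp
  have primeZ: "prime_ideal Z"
    unfolding prime_ideal_def
  proof (intro conjI allI impI)
    show "is_ideal Z" by (rule idZ)
    have "(1::('v,'k) mpoly) \<notin> Z" by (simp add: Z_def lookup_one)
    then show "Z \<noteq> UNIV" by auto
  next
    fix x y assume xy: "x * y \<in> Z"
    show "x \<in> Z \<or> y \<in> Z"
    proof (rule ccontr)
      assume "\<not> (x \<in> Z \<or> y \<in> Z)"
      define c where "c = Poly_Mapping.lookup x 0"
      define d where "d = Poly_Mapping.lookup y 0"
      have cd: "c \<noteq> 0" "d \<noteq> 0" using \<open>\<not> (x \<in> Z \<or> y \<in> Z)\<close> by (auto simp: Z_def c_def d_def)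
      define x' where "x' = x - Poly_Mapping.single 0 c"
      define y' where "y' = y - Poly_Mapping.single 0 d"
      have x'Z: "x' \<in> Z" and y'Z: "y' \<in> Z" by (simp_all add: Z_def c_def d_def x'_def y'_def lookup_minus)
      have xe: "x = Poly_Mapping.single 0 c + x'" and ye: "y = Poly_Mapping.single 0 d + y'"
        by (simp_all add: x'_def y'_def)
      have "x * y = (Poly_Mapping.single 0 c + x') * (Poly_Mapping.single 0 d + y')"
        using xe ye by simp
      also have "\<dots> = Poly_Mapping.single 0 (c * d) + (Poly_Mapping.single 0 c * y' + (Poly_Mapping.single 0 d + y') * x')"
        by (simp add: algebra_simps mult_single)
      finally have "x * y = Poly_Mapping.single 0 (c * d) + (Poly_Mapping.single 0 c * y' + (Poly_Mapping.single 0 d + y') * x')" .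
      moreover have "Poly_Mapping.single 0 c * y' + (Poly_Mapping.single 0 d + y') * x' \<in> Z"
        using idZ x'Z y'Z by (simp add: is_ideal_def)
      ultimately have "Poly_Mapping.lookup (x * y) 0 = c * d"
        by (simp add: lookup_add Z_def)
      then show False using xy cd by (simp add: Z_def)
    qed
  qed
  have hom: "homogeneous (mdeg m) f"
    by (simp add: homogeneous_def f_def monom_def)
  have "v_number I \<le> mdeg m"
    unfolding v_number_def
    by (rule Least_le) (use hom primeZ colZ in \<open>auto simp: Ass_def\<close>)
  also have "\<dots> \<le> (\<Sum>i\<in>UNIV. a i - 1)" by (rule mdeg_le[OF mB])
  also have "\<dots> = (\<Sum>i\<in>UNIV. a i) - (\<Sum>i\<in>(UNIV::'v set). 1)"
    by (rule sum_subtractf_nat) (use assms(3) in \<open>simp add: Suc_le_eq\<close>)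
  also have "\<dots> = (\<Sum>i\<in>UNIV. a i) - card (UNIV :: 'v set)" by simp
  finally show ?thesis .
qed

end
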